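(* Let $H=(V,E)$ be a (finite) hypergraph. Then $H$ is perturbable if and only if $H$ does not have a perfect fractional matching.
   Context: For a hypergraph $H=(V,E)$ with $V=\{v_1,\dots,v_n\}$, a perturbation on $H$ is a function $p:V\to\mathbb{R}$ such that $\sum_{i=1}^n p(v_i)=0$ and for every edge $e\in E$, $p(e)=\sum_{v\in e}p(v)<0$. $H$ is perturbable if a perturbation on $H$ exists. A fractional matching is a function $m:E\to[0,1]$ such that for every $v\in V$, $\sum_{e\ni v} m(e)\leq 1$; it is perfect if $\sum_{e\ni v} m(e)=1$ for every $v\in V$. *)

theory Defs
  imports Main "HOL-Library.Multiset" Complex_Main
begin

definition hypergraph :: "'a set \<Rightarrow> 'a set set \<Rightarrow> bool" where
  "hypergraph V E \<longleftrightarrow> finite V \<and> V \<noteq> {} \<and> (\<forall>e\<in>E. e \<noteq> {} \<and> e \<subseteq> V)"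

definition perturbation :: "'a set \<Rightarrow> 'a set set \<Rightarrow> ('a \<Rightarrow> real) \<Rightarrow> bool" where
  "perturbation V E p \<longleftrightarrow> (\<Sum>v\<in>V. p v) = 0 \<and> (\<forall>e\<in>E. (\<Sum>v\<in>e. p v) < 0)"

definition perturbable :: "'a set \<Rightarrow> 'a set set \<Rightarrow> bool" where
  "perturbable V E \<longleftrightarrow> (\<exists>p. perturbation V E p)"

definition fractional_matching :: "'a set \<Rightarrow> 'a set set \<Rightarrow> ('a set \<Rightarrow> real) \<Rightarrow> bool" where
  "fractional_matching V E m \<longleftrightarrow> (\<forall>e\<in>E. 0 \<le> m e \<and> m e \<le> 1)
     \<and> (\<forall>v\<in>V. (\<Sum>e\<in>{e\<in>E. v \<in> e}. m e) \<le> 1)"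

definition perfect_fractional_matching :: "'a set \<Rightarrow> 'a set set \<Rightarrow> ('a set \<Rightarrow> real) \<Rightarrow> bool" where
  "perfect_fractional_matching V E m \<longleftrightarrow> fractional_matching V E m
     \<and> (\<forall>v\<in>V. (\<Sum>e\<in>{e\<in>E. v \<in> e}. m e) = 1)"

end

theory Submission
  imports Defs
begin

definition dotp :: "'a set \<Rightarrow> ('a \<Rightarrow> real) \<Rightarrow> ('a \<Rightarrow> real) \<Rightarrow> real" where
  "dotp V a x = (\<Sum>v\<in>V. a v * x v)"

lemma small_eps:
  fixes f g :: "'i \<Rightarrow> real"
  assumes "finite I" "\<forall>i\<in>I. f i < 0"
  shows "\<exists>\<epsilon>>0. \<forall>\<delta>. 0 \<le> \<delta> \<and> \<delta> \<le> \<epsilon> \<longrightarrow> (\<forall>i\<in>I. f i + \<delta> * g i < 0)"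
  using assms
proof (induction I rule: finite_induct)
  case empty
  then show ?case by (intro exI[of _ 1]) auto
next
  case (insert j I)
  then obtain e1 where e1: "e1 > 0" "\<forall>\<delta>. 0 \<le> \<delta> \<and> \<delta> \<le> e1 \<longrightarrow> (\<forall>i\<in>I. f i + \<delta> * g i < 0)"
    by auto
  have fj: "f j < 0" using insert by auto
  define e2 where "e2 = (if g j \<le> 0 then 1 else - f j / (2 * g j))"
  have e2: "e2 > 0" using fj by (auto simp: e2_def divide_neg_pos)
  have j: "f j + \<delta> * g j < 0" if "0 \<le> \<delta>" "\<delta> \<le> e2" for \<delta>
  proof (cases "g j \<le> 0")
    case True
    then have "\<delta> * g j \<le> 0" using that by (simp add: mult_nonneg_nonpos)
    then show ?thesis using fj by linarith
  next
    case False
    then have "\<delta> * g j \<le> e2 * g j" using that by (simp add: mult_right_mono)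
    also have "e2 * g j = - f j / 2" using False by (simp add: e2_def)
    finally show ?thesis using fj by linarith
  qed
  show ?case
    apply (rule exI[of _ "min e1 e2"])
    using e1 e2 j by auto
qed

lemma gordan:
  fixes a :: "'i \<Rightarrow> 'a \<Rightarrow> real"
  assumes "finite I" "finite V"
  shows "(\<exists>x. \<forall>i\<in>I. dotp V (a i) x < 0) \<or>
         (\<exists>l. (\<forall>i\<in>I. l i \<ge> 0) \<and> (\<exists>i\<in>I. l i > 0) \<and> (\<forall>v\<in>V. (\<Sum>i\<in>I. l i * a i v) = 0))"
  using assms(1)
proof (induction I arbitrary: a rule: finite_induct)
  case empty
  then show ?case by auto
next
  case (insert j I)
  show ?case
  proof (cases "\<forall>v\<in>V. a j v = 0")
    case True
    have "\<forall>v\<in>V. (\<Sum>i\<in>insert j I. (if i = j then 1 else 0) * a i v) = 0"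
      using True insert(1,2) by (simp, intro ballI sum.neutral) auto
    then show ?thesis by (intro disjI2 exI[of _ "\<lambda>i. if i = j then 1 else 0"]) auto
  next
    case False
    then obtain v0 where v0: "v0 \<in> V" "a j v0 \<noteq> 0" by auto
    define u where "u = (\<lambda>v. - a j v)"
    have uneg: "dotp V (a j) u < 0"
    proof -
      have "(\<Sum>v\<in>V. a j v * a j v) > 0"
        using v0 assms(2)
        by (intro sum_pos2[of V v0]) (auto simp: zero_less_mult_iff linorder_neq_iff)
      then show ?thesis by (simp add: dotp_def u_def sum_negf)
    qed
    from insert.IH[of a] show ?thesis
    proof
      assume "\<exists>l. (\<forall>i\<in>I. l i \<ge> 0) \<and> (\<exists>i\<in>I. l i > 0) \<and> (\<forall>v\<in>V. (\<Sum>i\<in>I. l i * a i v) = 0)"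
      then obtain l where l: "\<forall>i\<in>I. l i \<ge> 0" "\<exists>i\<in>I. l i > 0" "\<forall>v\<in>V. (\<Sum>i\<in>I. l i * a i v) = 0"
        by blast
      define l' where "l' = l(j := 0)"
      have "\<forall>v\<in>V. (\<Sum>i\<in>insert j I. l' i * a i v) = 0"
      proof
        fix v assume "v \<in> V"
        have "(\<Sum>i\<in>I. l' i * a i v) = (\<Sum>i\<in>I. l i * a i v)"
          using insert(2) by (intro sum.cong) (auto simp: l'_def)
        then show "(\<Sum>i\<in>insert j I. l' i * a i v) = 0"
          using l(3) \<open>v \<in> V\<close> insert(1,2) by (simp add: l'_def)
      qed
      moreover have "\<forall>i\<in>insert j I. l' i \<ge> 0" using l(1) by (auto simp: l'_def)
      moreover have "\<exists>i\<in>insert j I. l' i > 0" using l(2) insert(2) by (auto simp: l'_def)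
      ultimately show ?thesis by blast
    next
      assume "\<exists>x. \<forall>i\<in>I. dotp V (a i) x < 0"
      then obtain x where x: "\<forall>i\<in>I. dotp V (a i) x < 0" by blast
      define c where "c = dotp V (a j) x"
      show ?thesis
      proof (cases "c < 0")
        case True
        then show ?thesis using x by (auto simp: c_def)
      next
        case False
        then have c0: "c \<ge> 0" by simp
        define b where "b = (\<lambda>i v. c * a i v - dotp V (a i) x * a j v)"
        from insert.IH[of b] show ?thesis
        proof
          assume "\<exists>l. (\<forall>i\<in>I. l i \<ge> 0) \<and> (\<exists>i\<in>I. l i > 0) \<and> (\<forall>v\<in>V. (\<Sum>i\<in>I. l i * b i v) = 0)"
          then obtain l where l: "\<forall>i\<in>I. l i \<ge> 0" "\<exists>i\<in>I. l i > 0" "\<forall>v\<in>V. (\<Sum>i\<in>I. l i * b i v) = 0"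
            by blast
          define l' where "l' = (\<lambda>i. if i = j then (\<Sum>k\<in>I. l k * (- dotp V (a k) x)) else c * l i)"
          have pos: "l' j > 0"
          proof -
            obtain k where k: "k \<in> I" "l k > 0" using l(2) by blast
            have "(\<Sum>k\<in>I. l k * (- dotp V (a k) x)) > 0"
              using k l(1) x insert(1)
              by (intro sum_pos2[of I k]) (auto simp: mult_pos_neg mult_nonneg_nonpos less_imp_le)
            then show ?thesis by (simp add: l'_def)
          qed
          have "(\<Sum>i\<in>insert j I. l' i * a i v) = 0" if "v \<in> V" for v
          proof -
            have "(\<Sum>i\<in>insert j I. l' i * a i v) = l' j * a j v + (\<Sum>i\<in>I. c * l i * a i v)"
            proof -
              have "(\<Sum>i\<in>I. l' i * a i v) = (\<Sum>i\<in>I. c * l i * a i v)"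
                using insert(2) by (intro sum.cong) (auto simp: l'_def)
              then show ?thesis using insert(1,2) by simp
            qed
            also have "\<dots> = (\<Sum>i\<in>I. l i * b i v)"
              by (simp add: l'_def b_def sum_distrib_right sum_distrib_left sum.distrib[symmetric] algebra_simps
                  sum_subtractf sum_negf)
            also have "\<dots> = 0" using l(3) that by blast
            finally show ?thesis .
          qed
          moreover have "\<forall>i\<in>insert j I. l' i \<ge> 0" using l(1) pos c0 by (auto simp: l'_def)
          ultimately show ?thesis using pos by blast
        next
          assume "\<exists>y. \<forall>i\<in>I. dotp V (b i) y < 0"
          then obtain y where y: "\<forall>i\<in>I. dotp V (b i) y < 0" by blast
          define w where "w = (\<lambda>v. c * y v - dotp V (a j) y * x v)"
          have dw: "dotp V (a i) w = dotp V (b i) y" for i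
            by (simp add: w_def b_def dotp_def algebra_simps sum_subtractf sum_distrib_left
                sum_distrib_right) (rule sum.swap)
          have dwj: "dotp V (a j) w = 0"
            by (simp add: w_def c_def dotp_def algebra_simps sum_subtractf sum_distrib_left
                sum_distrib_right) (subst sum.swap, simp add: ac_simps)
          obtain \<epsilon> where eps: "\<epsilon> > 0"
            "\<forall>i\<in>I. dotp V (a i) w + \<epsilon> * dotp V (a i) u < 0"
            using small_eps[OF insert(1), of "\<lambda>i. dotp V (a i) w" "\<lambda>i. dotp V (a i) u"] y dw
            by (metis less_eq_real_def order_refl)
          define z where "z = (\<lambda>v. w v + \<epsilon> * u v)"
          have dz: "dotp V (a i) z = dotp V (a i) w + \<epsilon> * dotp V (a i) u" for i
            by (simp add: z_def dotp_def algebra_simps sum.distrib sum_distrib_left)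
          have "dotp V (a j) z < 0" using dz dwj eps(1) uneg by (simp add: mult_pos_neg)
          then show ?thesis using eps dz by (intro disjI1 exI[of _ z]) auto
        qed
      qed
    qed
  qed
qed


lemma no_both:
  assumes H: "hypergraph V E" and p: "perturbation V E p" and m: "perfect_fractional_matching V E m"
  shows False
proof -
  have fV: "finite V" and ne: "V \<noteq> {}" and sub: "\<forall>e\<in>E. e \<noteq> {} \<and> e \<subseteq> V"
    using H by (auto simp: hypergraph_def)
  have fE: "finite E" using fV sub by (meson PowI finite_Pow_iff finite_subset subsetI)
  have m1: "\<forall>v\<in>V. (\<Sum>e\<in>{e\<in>E. v \<in> e}. m e) = 1" and m0: "\<forall>e\<in>E. 0 \<le> m e"
    using m by (auto simp: perfect_fractional_matching_def fractional_matching_def)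
  have "0 = (\<Sum>v\<in>V. p v)" using p by (simp add: perturbation_def)
  also have "\<dots> = (\<Sum>v\<in>V. \<Sum>e\<in>{e\<in>E. v \<in> e}. m e * p v)"
    using m1 by (simp add: sum_distrib_right[symmetric])
  also have "\<dots> = (\<Sum>e\<in>E. \<Sum>v\<in>{v\<in>V. v \<in> e}. m e * p v)"
    by (rule sum.swap_restrict[OF fV fE])
  also have "\<dots> = (\<Sum>e\<in>E. m e * (\<Sum>v\<in>e. p v))"
  proof (rule sum.cong)
    fix e assume "e \<in> E"
    then have "{v\<in>V. v \<in> e} = e" using sub by auto
    then show "(\<Sum>v\<in>{v\<in>V. v \<in> e}. m e * p v) = m e * (\<Sum>v\<in>e. p v)"
      by (simp add: sum_distrib_left)
  qed simp
  finally have s0: "(\<Sum>e\<in>E. m e * (\<Sum>v\<in>e. p v)) = 0" by simp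
  have np: "\<forall>e\<in>E. m e * (\<Sum>v\<in>e. p v) \<le> 0"
    using p m0 by (auto simp: perturbation_def mult_nonneg_nonpos less_imp_le)
  have "\<forall>e\<in>E. - (m e * (\<Sum>v\<in>e. p v)) = 0"
    using sum_nonneg_eq_0_iff[OF fE, of "\<lambda>e. - (m e * (\<Sum>v\<in>e. p v))"] s0 np
    by (simp add: sum_negf)
  then have "\<forall>e\<in>E. m e = 0" using p unfolding perturbation_def by fastforce
  moreover obtain v where "v \<in> V" using ne by auto
  ultimately show False using m1 by auto
qed

theorem theorem2p2:
  fixes V :: "'a set" and E :: "'a set set"
  assumes "hypergraph V E"
  shows "perturbable V E \<longleftrightarrow> \<not> (\<exists>m. perfect_fractional_matching V E m)"
proof -
  have fV: "finite V" and ne: "V \<noteq> {}" and sub: "\<forall>e\<in>E. e \<noteq> {} \<and> e \<subseteq> V"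
    using assms by (auto simp: hypergraph_def)
  have fE: "finite E" using fV sub by (meson PowI finite_Pow_iff finite_subset subsetI)
  define n where "n = real (card V)"
  have n0: "n > 0" using fV ne by (simp add: n_def card_gt_0_iff)
  define a where "a = (\<lambda>(e::'a set) (v::'a). (if v \<in> e then 1 else 0) - real (card e) / n)"
  have "\<exists>m. perfect_fractional_matching V E m" if np: "\<not> perturbable V E"
  proof -
    from gordan[OF fE fV, of a] show ?thesis
    proof
      assume "\<exists>x. \<forall>i\<in>E. dotp V (a i) x < 0"
      then obtain x where x: "\<forall>e\<in>E. dotp V (a e) x < 0" by blast
      define S where "S = (\<Sum>v\<in>V. x v)"
      define p where "p = (\<lambda>v. x v - S / n)"
      have "(\<Sum>v\<in>V. p v) = 0"
        using n0 by (simp add: p_def sum_subtractf S_def n_def[symmetric])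
      moreover have "(\<Sum>v\<in>e. p v) < 0" if "e \<in> E" for e
      proof -
        have fe: "finite e" using sub that fV finite_subset by blast
        have "dotp V (a e) x = (\<Sum>v\<in>V. (if v \<in> e then x v else 0) - real (card e) / n * x v)"
          unfolding dotp_def by (intro sum.cong) (auto simp: a_def algebra_simps)
        also have "\<dots> = (\<Sum>v\<in>V. (if v \<in> e then x v else 0)) - real (card e) / n * S"
          by (simp add: sum_subtractf S_def sum_distrib_left)
        finally have "dotp V (a e) x = (\<Sum>v\<in>V. (if v \<in> e then x v else 0)) - real (card e) / n * S" .
        also have "(\<Sum>v\<in>V. (if v \<in> e then x v else 0)) = (\<Sum>v\<in>e. x v)"
          using sub that fV by (simp add: sum.If_cases Int_absorb1)
        finally have d1: "dotp V (a e) x = (\<Sum>v\<in>e. x v) - real (card e) / n * S" .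
        have d2: "(\<Sum>v\<in>e. p v) = (\<Sum>v\<in>e. x v) - real (card e) / n * S"
          by (simp add: p_def sum_subtractf)
        have d3: "dotp V (a e) x < 0" using x that by blast
        show ?thesis unfolding d2 d1[symmetric] by (rule d3)
      qed
      ultimately have "perturbable V E" by (auto simp: perturbable_def perturbation_def)
      then show ?thesis using np by simp
    next
      assume "\<exists>l. (\<forall>i\<in>E. l i \<ge> 0) \<and> (\<exists>i\<in>E. l i > 0) \<and> (\<forall>v\<in>V. (\<Sum>i\<in>E. l i * a i v) = 0)"
      then obtain l where l0: "\<forall>e\<in>E. l e \<ge> 0" and lp: "\<exists>e\<in>E. l e > 0"
        and ls: "\<forall>v\<in>V. (\<Sum>e\<in>E. l e * a e v) = 0" by blast
      define C where "C = (\<Sum>e\<in>E. l e * real (card e)) / n"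
      have Cpos: "C > 0"
      proof -
        obtain e0 where e0: "e0 \<in> E" "l e0 > 0" using lp by blast
        have "card e0 > 0" using e0 sub fV finite_subset by (metis card_gt_0_iff)
        then have "(\<Sum>e\<in>E. l e * real (card e)) > 0"
          using e0 l0 fE by (intro sum_pos2[of E e0]) auto
        then show ?thesis using n0 by (simp add: C_def)
      qed
      have key: "(\<Sum>e\<in>{e\<in>E. v \<in> e}. l e) = C" if "v \<in> V" for v
      proof -
        have "0 = (\<Sum>e\<in>E. l e * a e v)" using ls that by simp
        also have "\<dots> = (\<Sum>e\<in>E. (if v \<in> e then l e else 0) - l e * real (card e) / n)"
          by (intro sum.cong) (auto simp: a_def algebra_simps)
        also have "\<dots> = (\<Sum>e\<in>E. (if v \<in> e then l e else 0)) - C"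
          by (simp add: C_def sum_subtractf sum_divide_distrib)
        finally have k1: "0 = (\<Sum>e\<in>E. (if v \<in> e then l e else 0)) - C" .
        have k2: "(\<Sum>e\<in>{e\<in>E. v \<in> e}. l e) = (\<Sum>e\<in>E. (if v \<in> e then l e else 0))"
          using fE by (rule sum.inter_filter)
        have "(\<Sum>e\<in>E. (if v \<in> e then l e else 0)) = C" using k1 by simp
        then show ?thesis using k2 by simp
      qed
      define m where "m = (\<lambda>e. l e / C)"
      have msum: "(\<Sum>e\<in>{e\<in>E. v \<in> e}. m e) = 1" if "v \<in> V" for v
      proof -
        have "(\<Sum>e\<in>{e\<in>E. v \<in> e}. m e) = (\<Sum>e\<in>{e\<in>E. v \<in> e}. l e) / C"
          unfolding m_def by (rule sum_divide_distrib[symmetric])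
        then show ?thesis using key[OF that] Cpos by simp
      qed
      have mle: "m e \<le> 1" if "e \<in> E" for e
      proof -
        have "e \<noteq> {}" "e \<subseteq> V" using sub that by simp_all
        then obtain v where v: "v \<in> e" and vV: "v \<in> V" by blast
        have "m e \<le> (\<Sum>e\<in>{e\<in>E. v \<in> e}. m e)"
          using fE that v l0 Cpos
          by (intro member_le_sum) (auto simp: m_def)
        then show ?thesis using msum[OF vV] by simp
      qed
      have "perfect_fractional_matching V E m"
        unfolding perfect_fractional_matching_def fractional_matching_def
        using msum mle l0 Cpos by (auto simp: m_def)
      then show ?thesis by blast
    qed
  qed
  moreover have "\<not> (\<exists>m. perfect_fractional_matching V E m)" if "perturbable V E"
    using that no_both[OF assms] by (auto simp: perturbable_def)
  ultimately show ?thesis by blast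
qed

end
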